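(* Let $\lambda=(\lambda_1,\dots,\lambda_n)$ be a composition of $N$ with positive parts and $\lambda_1\le\cdots\le\lambda_n$. Let $0\ne\mu\subseteq\lambda$ with $\ell(\mu)=d_{|\mu|}=:d$, and let $1\le i_1<\cdots<i_d\le n$ be the positions of the non-zero parts of $\mu$. Then for every $w\in S_d$ and every $j=1,\dots,d$ we have $\mu_{i_j}>\lambda_{i_j}-\min(\lambda_{i_{wj}},\lambda_{i_j})$.
   Context: $(d_1,\dots,d_N)$ is the sequence consisting of $\lambda_n$ copies of $1$, followed by $\lambda_{n-1}$ copies of $2$, ..., followed by $\lambda_1$ copies of $n$. For a composition $\mu=(\mu_1,\dots,\mu_n)$, $\mu\subseteq\lambda$ means $0\le\mu_i\le\lambda_i$ for all $i$, $|\mu|=\sum_i\mu_i$, and $\ell(\mu)$ is the number of non-zero parts. *)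

theory Defs
  imports "HOL-Combinatorics.Permutations"
begin

text \<open>Compositions of length n are functions nat => nat, with parts indexed 1..n.\<close>

text \<open>The sequence (d_1,...,d_N): lam n copies of 1, lam (n-1) copies of 2, ..., lam 1 copies of n
  (as a 0-indexed list).\<close>
definition dseq :: "(nat \<Rightarrow> nat) \<Rightarrow> nat \<Rightarrow> nat list" where
  "dseq lam n = concat (map (\<lambda>m. replicate (lam (n + 1 - m)) m) [1..<Suc n])"

text \<open>d_k, 1-indexed (meaningful for 1 <= k <= N).\<close>
definition d_at :: "(nat \<Rightarrow> nat) \<Rightarrow> nat \<Rightarrow> nat \<Rightarrow> nat" where
  "d_at lam n k = dseq lam n ! (k - 1)"

definition comp_size :: "(nat \<Rightarrow> nat) \<Rightarrow> nat \<Rightarrow> nat" where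
  "comp_size mu n = (\<Sum>i\<in>{1..n}. mu i)"

definition support :: "(nat \<Rightarrow> nat) \<Rightarrow> nat \<Rightarrow> nat set" where
  "support mu n = {i \<in> {1..n}. mu i \<noteq> 0}"

definition comp_len :: "(nat \<Rightarrow> nat) \<Rightarrow> nat \<Rightarrow> nat" where
  "comp_len mu n = card (support mu n)"

text \<open>i_j: position of the j-th non-zero part (1-indexed j).\<close>
definition pos :: "(nat \<Rightarrow> nat) \<Rightarrow> nat \<Rightarrow> nat \<Rightarrow> nat" where
  "pos mu n j = sorted_list_of_set (support mu n) ! (j - 1)"

end

theory Submission
  imports Defs
begin

lemma concat_rep_len:
  "length (concat (map (\<lambda>m. replicate (f m) m) [a..<b])) = (\<Sum>x\<in>{a..<b}. f x)"
  by (simp add: length_concat comp_def sum_list_distinct_conv_sum_set)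

lemma concat_rep_nth:
  assumes "i < length (concat (map (\<lambda>m. replicate (f m) m) [a..<b]))"
  shows "(\<Sum>x\<in>{a..<concat (map (\<lambda>m. replicate (f m) m) [a..<b]) ! i}. f x) \<le> i"
  using assms
proof (induction b)
  case 0
  then show ?case by simp
next
  case (Suc b)
  show ?case
  proof (cases "a \<le> b")
    case False
    then show ?thesis using Suc.prems by simp
  next
    case True
    let ?L = "concat (map (\<lambda>m. replicate (f m) m) [a..<b])"
    have eq: "concat (map (\<lambda>m. replicate (f m) m) [a..<Suc b]) = ?L @ replicate (f b) b"
      using True by simp
    show ?thesis
    proof (cases "i < length ?L")
      case True
      then show ?thesis using Suc.IH eq by (simp add: nth_append)
    next
      case False
      then have "concat (map (\<lambda>m. replicate (f m) m) [a..<Suc b]) ! i = b"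
        using Suc.prems eq by (simp add: nth_append)
      then show ?thesis using False concat_rep_len[of f a b] by simp
    qed
  qed
qed

lemma top_sum:
  assumes mono: "\<forall>i j. 1 \<le> i \<and> i \<le> j \<and> j \<le> n0 \<longrightarrow> lam i \<le> (lam j::nat)"
  shows "n \<le> n0 \<Longrightarrow> S \<subseteq> {1..n} \<Longrightarrow> card S = k \<Longrightarrow> sum lam S \<le> (\<Sum>t<k. lam (n - t))"
proof (induction n arbitrary: S k)
  case 0
  then have "S = {}" by auto
  then show ?case using 0 by simp
next
  case (Suc n)
  have fin: "finite S" using Suc.prems finite_subset by blast
  show ?case
  proof (cases "Suc n \<in> S")
    case True
    obtain k' where k: "k = Suc k'" using True fin Suc.prems(3) by (cases k) auto
    have "sum lam S = lam (Suc n) + sum lam (S - {Suc n})"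
      using True fin by (simp add: sum.remove)
    also have "sum lam (S - {Suc n}) \<le> (\<Sum>t<k'. lam (n - t))"
      using Suc.prems True fin k by (intro Suc.IH) auto
    finally show ?thesis using k by (simp del: sum.lessThan_Suc add: sum.lessThan_Suc_shift)
  next
    case False
    show ?thesis
    proof (cases "S = {}")
      case True then show ?thesis using Suc.prems by simp
    next
      case ne: False
      then obtain s where s: "s \<in> S" by blast
      obtain k' where k: "k = Suc k'" using s fin Suc.prems(3) by (cases k) auto
      have "sum lam S = lam s + sum lam (S - {s})"
        using s fin by (simp add: sum.remove)
      also have "sum lam (S - {s}) \<le> (\<Sum>t<k'. lam (n - t))"
        using Suc.prems False s fin k by (intro Suc.IH) (auto simp: subset_iff le_Suc_eq)
      also have "lam s \<le> lam (Suc n)" using mono s Suc.prems by auto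
      finally show ?thesis using k by (simp del: sum.lessThan_Suc add: sum.lessThan_Suc_shift)
    qed
  qed
qed

lemma shift_sum: "(\<Sum>x\<in>{1..<(m::nat)+1}. f (n + 1 - x)) = (\<Sum>t<m. (f (n - t)::nat))"
proof -
  have "(\<Sum>x\<in>{0+1..<m+1}. f (n + 1 - x)) = (\<Sum>x\<in>{0..<m}. f (n + 1 - (x+1)))"
    by (rule sum.shift_bounds_nat_ivl)
  then show ?thesis by (simp add: lessThan_atLeast0)
qed

theorem lemma3p8:
  fixes lam mu :: "nat \<Rightarrow> nat" and n N :: nat
  assumes pos_parts: "\<forall>i\<in>{1..n}. 0 < lam i"
    and mono: "\<forall>i j. 1 \<le> i \<and> i \<le> j \<and> j \<le> n \<longrightarrow> lam i \<le> lam j"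
    and N_def: "N = (\<Sum>i\<in>{1..n}. lam i)"
    and sub: "\<forall>i\<in>{1..n}. mu i \<le> lam i"
    and nonzero: "\<exists>i\<in>{1..n}. mu i \<noteq> 0"
    and len: "comp_len mu n = d_at lam n (comp_size mu n)"
  shows "\<forall>w. w permutes {1..comp_len mu n} \<longrightarrow>
           (\<forall>j\<in>{1..comp_len mu n}.
              mu (pos mu n j) > lam (pos mu n j) - min (lam (pos mu n (w j))) (lam (pos mu n j)))"
proof (intro allI impI ballI)
  fix w j
  assume w: "w permutes {1..comp_len mu n}" and j: "j \<in> {1..comp_len mu n}"
  define S where "S = support mu n"
  define d where "d = comp_len mu n"
  define k where "k = comp_size mu n"
  have finS: "finite S" and Ssub: "S \<subseteq> {1..n}" unfolding S_def support_def by auto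
  have dS: "d = card S" unfolding d_def S_def comp_len_def by simp
  have Sne: "S \<noteq> {}" using nonzero unfolding S_def support_def by auto
  have d1: "d \<ge> 1" using dS finS Sne by (simp add: Suc_le_eq card_gt_0_iff)
  have kS: "k = sum mu S"
    unfolding k_def comp_size_def S_def support_def
    by (rule sum.mono_neutral_right) auto
  have kN: "k \<le> N" unfolding k_def comp_size_def N_def using sub by (intro sum_mono) auto
  have k1: "k \<ge> 1"
  proof -
    obtain i where "i \<in> S" using Sne by blast
    then have "mu i \<le> sum mu S" using finS by (intro member_le_sum) auto
    then show ?thesis using kS \<open>i \<in> S\<close> unfolding S_def support_def by auto
  qed
  define f where "f = (\<lambda>m. lam (n + 1 - m))"
  have dseq_eq: "dseq lam n = concat (map (\<lambda>m. replicate (f m) m) [1..<n+1])"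
    unfolding dseq_def f_def by simp
  have lenN: "N \<le> length (dseq lam n)"
  proof -
    have "N \<le> (\<Sum>t<card {1..n}. lam (n - t))"
      unfolding N_def by (rule top_sum[OF mono]) auto
    also have "\<dots> = (\<Sum>x\<in>{1..<n+1}. f x)" using shift_sum[of lam n n] by (simp add: f_def)
    finally show ?thesis unfolding dseq_eq concat_rep_len .
  qed
  have ilt: "k - 1 < length (dseq lam n)" using k1 kN lenN by linarith
  have dd: "d = dseq lam n ! (k - 1)" using len unfolding d_def k_def d_at_def by simp
  have "(\<Sum>x\<in>{1..<d}. f x) \<le> k - 1"
  proof -
    have "(\<Sum>x\<in>{1..<dseq lam n ! (k-1)}. f x) \<le> k-1"
      using concat_rep_nth[of "k-1" f 1 "n+1", folded dseq_eq] ilt by blast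
    then show ?thesis using dd by simp
  qed
  moreover have "(\<Sum>x\<in>{1..<d}. f x) = (\<Sum>t<d-1. lam (n - t))"
    using shift_sum[of lam n "d-1"] d1 by (simp add: f_def)
  ultimately have top: "(\<Sum>t<d-1. lam (n - t)) < k" using k1 by linarith
  have posin: "pos mu n j' \<in> S" if "j' \<in> {1..d}" for j'
  proof -
    have "j' - 1 < length (sorted_list_of_set S)" using that dS by auto
    then have "sorted_list_of_set S ! (j'-1) \<in> set (sorted_list_of_set S)" by (rule nth_mem)
    then show ?thesis unfolding pos_def S_def[symmetric] using finS by simp
  qed
  define i where "i = pos mu n j"
  define i' where "i' = pos mu n (w j)"
  have iS: "i \<in> S" using posin j unfolding i_def d_def by blast
  have wj: "w j \<in> {1..d}" using permutes_in_image[OF w] j unfolding d_def by simp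
  have i'S: "i' \<in> S" using posin wj unfolding i'_def by blast
  have mui: "mu i > 0" using iS unfolding S_def support_def by auto
  have main: "mu i > lam i - min (lam i') (lam i)"
  proof (cases "i = i'")
    case True then show ?thesis using mui by simp
  next
    case ne: False
    define R where "R = S - {i, i'}"
    have finR: "finite R" using finS unfolding R_def by simp
    have nR: "i \<notin> R" "i' \<notin> R" unfolding R_def by auto
    have "sum lam (S - {i'}) \<le> (\<Sum>t<d-1. lam (n - t))"
    proof (rule top_sum[OF mono])
      show "S - {i'} \<subseteq> {1..n}" using Ssub by blast
      show "card (S - {i'}) = d - 1" using dS i'S finS by simp
    qed simp
    moreover have "sum lam (S - {i'}) = lam i + sum lam R"
    proof -
      have "S - {i'} = insert i R" using iS ne unfolding R_def by auto
      then show ?thesis using finR nR by simp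
    qed
    moreover have "sum mu (S - {i}) \<le> sum lam (S - {i})"
      using sub Ssub by (intro sum_mono) auto
    moreover have "sum lam (S - {i}) = lam i' + sum lam R"
    proof -
      have "S - {i} = insert i' R" using i'S ne unfolding R_def by auto
      then show ?thesis using finR nR by simp
    qed
    moreover have "k = mu i + sum mu (S - {i})" using kS iS finS by (simp add: sum.remove)
    ultimately have "lam i + sum lam R < mu i + lam i' + sum lam R" using top by linarith
    then show ?thesis using mui by (simp add: min_def less_diff_conv2)
  qed
  show "mu (pos mu n j) > lam (pos mu n j) - min (lam (pos mu n (w j))) (lam (pos mu n j))"
    using main unfolding i_def i'_def .
qed

end
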